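(* Let $\mathbb{A}$ be a 2-category, let $p_0:e\to b_0$ and $p_1:e\to b_1$ be 1-cells of $\mathbb{A}$, and suppose $\mathbb{A}$ has an opcomma object $(p_0\uparrow p_1,\delta^0,\delta^1,\alpha)$ of $p_1$ along $p_0$. For every 1-cell $h:p_0\uparrow p_1\to y$ of $\mathbb{A}$ the following statements are equivalent: (i) the pair $(h,\ \mathrm{id}_{h\delta^0})$ is a right Kan extension of $h\delta^0$ along $\delta^0$; (ii) the pair $(h\delta^1,\ \mathrm{id}_h\ast\alpha)$ is a right Kan extension of $h\delta^0p_1$ along $p_0$.
   Context: A 2-category is a $\mathbf{Cat}$-enriched category; in it, composition of 1-cells is written by juxtaposition, vertical composition of 2-cells by $\cdot$, horizontal composition by $\ast$, and $\mathrm{id}_f$ is the identity 2-cell on a 1-cell $f$. An opcomma object of $p_1$ along $p_0$ is an object $p_0\uparrow p_1$ with 1-cells $\delta^0:b_1\to p_0\uparrow p_1$, $\delta^1:b_0\to p_0\uparrow p_1$ and a 2-cell $\alpha:\delta^1p_0\Rightarrow\delta^0p_1$ such that, for every object $y$, the functor $h\mapsto(h\delta^0,h\delta^1,\mathrm{id}_h\ast\alpha)$, $\xi\mapsto(\xi\ast\mathrm{id}_{\delta^0},\xi\ast\mathrm{id}_{\delta^1})$ is an isomorphism from $\mathbb{A}(p_0\uparrow p_1,y)$ onto the category whose objects are triples $(h_0:b_1\to y,\ h_1:b_0\to y,\ \beta:h_1p_0\Rightarrow h_0p_1)$ and whose morphisms $(h_0,h_1,\beta)\to(h_0',h_1',\beta')$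 are pairs of 2-cells $\xi_0:h_0\Rightarrow h_0'$, $\xi_1:h_1\Rightarrow h_1'$ with $(\xi_0\ast\mathrm{id}_{p_1})\cdot\beta=\beta'\cdot(\xi_1\ast\mathrm{id}_{p_0})$. A right Kan extension of $f:z\to y$ along $g:z\to x$ is a pair $(r:x\to y,\ \gamma:rg\Rightarrow f)$ such that for every 1-cell $k:x\to y$ the assignment $\beta\mapsto\gamma\cdot(\beta\ast\mathrm{id}_g)$ is a bijection from 2-cells $k\Rightarrow r$ to 2-cells $kg\Rightarrow f$. *)

theory Defs
  imports Main
begin

text \<open>Composition of 1-cells is in applicative order: comp1 g f is "g f" = g after f.
  vcomp b a is "b \<cdot> a" (a first), hcomp x y is "x \<ast> y".\<close>

record ('o, 'a, 'c) twocat =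
  obj   :: "'o set"
  hom1  :: "'o \<Rightarrow> 'o \<Rightarrow> 'a set"
  hom2  :: "'a \<Rightarrow> 'a \<Rightarrow> 'c set"
  id1   :: "'o \<Rightarrow> 'a"
  comp1 :: "'a \<Rightarrow> 'a \<Rightarrow> 'a"
  id2   :: "'a \<Rightarrow> 'c"
  vcomp :: "'c \<Rightarrow> 'c \<Rightarrow> 'c"
  hcomp :: "'c \<Rightarrow> 'c \<Rightarrow> 'c"

definition two_category :: "('o, 'a, 'c) twocat \<Rightarrow> bool" where
  "two_category C \<longleftrightarrow>
     \<comment> \<open>underlying category of objects and 1-cells\<close>
     (\<forall>x y. (x \<notin> obj C \<or> y \<notin> obj C) \<longrightarrow> hom1 C x y = {}) \<and>
     (\<forall>x y x' y' f. f \<in> hom1 C x y \<and> f \<in> hom1 C x' y' \<longrightarrow> x = x' \<and> y = y') \<and>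
     (\<forall>x \<in> obj C. id1 C x \<in> hom1 C x x) \<and>
     (\<forall>x y z f g. f \<in> hom1 C y z \<and> g \<in> hom1 C x y \<longrightarrow> comp1 C f g \<in> hom1 C x z) \<and>
     (\<forall>x y z w f g k. f \<in> hom1 C z w \<and> g \<in> hom1 C y z \<and> k \<in> hom1 C x y \<longrightarrow>
        comp1 C (comp1 C f g) k = comp1 C f (comp1 C g k)) \<and>
     (\<forall>x y f. f \<in> hom1 C x y \<longrightarrow> comp1 C (id1 C y) f = f \<and> comp1 C f (id1 C x) = f) \<and>
     \<comment> \<open>hom-categories\<close>
     (\<forall>f g. hom2 C f g \<noteq> {} \<longrightarrow> (\<exists>x y. f \<in> hom1 C x y \<and> g \<in> hom1 C x y)) \<and>
     (\<forall>f g f' g' \<theta>. \<theta> \<in> hom2 C f g \<and> \<theta> \<in> hom2 C f' g' \<longrightarrow> f = f' \<and> g = g') \<and>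
     (\<forall>x y f. f \<in> hom1 C x y \<longrightarrow> id2 C f \<in> hom2 C f f) \<and>
     (\<forall>f g k \<theta> \<eta>. \<theta> \<in> hom2 C g k \<and> \<eta> \<in> hom2 C f g \<longrightarrow> vcomp C \<theta> \<eta> \<in> hom2 C f k) \<and>
     (\<forall>f g k l \<theta> \<eta> \<zeta>. \<theta> \<in> hom2 C k l \<and> \<eta> \<in> hom2 C g k \<and> \<zeta> \<in> hom2 C f g \<longrightarrow>
        vcomp C (vcomp C \<theta> \<eta>) \<zeta> = vcomp C \<theta> (vcomp C \<eta> \<zeta>)) \<and>
     (\<forall>f g \<eta>. \<eta> \<in> hom2 C f g \<longrightarrow> vcomp C (id2 C g) \<eta> = \<eta> \<and> vcomp C \<eta> (id2 C f) = \<eta>) \<and>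
     \<comment> \<open>horizontal composition: a functor hom(y,z) x hom(x,y) -> hom(x,z)\<close>
     (\<forall>x y z f f' g g' \<xi> \<eta>. f \<in> hom1 C y z \<and> f' \<in> hom1 C y z \<and> g \<in> hom1 C x y \<and> g' \<in> hom1 C x y
        \<and> \<xi> \<in> hom2 C f f' \<and> \<eta> \<in> hom2 C g g' \<longrightarrow>
        hcomp C \<xi> \<eta> \<in> hom2 C (comp1 C f g) (comp1 C f' g')) \<and>
     (\<forall>x y z f g. f \<in> hom1 C y z \<and> g \<in> hom1 C x y \<longrightarrow>
        hcomp C (id2 C f) (id2 C g) = id2 C (comp1 C f g)) \<and>
     (\<forall>x y z f f' f'' g g' g'' \<xi> \<xi>' \<eta> \<eta>'.
        f \<in> hom1 C y z \<and> f' \<in> hom1 C y z \<and> f'' \<in> hom1 C y z \<and>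
        g \<in> hom1 C x y \<and> g' \<in> hom1 C x y \<and> g'' \<in> hom1 C x y \<and>
        \<xi> \<in> hom2 C f f' \<and> \<xi>' \<in> hom2 C f' f'' \<and> \<eta> \<in> hom2 C g g' \<and> \<eta>' \<in> hom2 C g' g'' \<longrightarrow>
        hcomp C (vcomp C \<xi>' \<xi>) (vcomp C \<eta>' \<eta>) = vcomp C (hcomp C \<xi>' \<eta>') (hcomp C \<xi> \<eta>)) \<and>
     \<comment> \<open>associativity and unit laws for horizontal composition\<close>
     (\<forall>x y z w f f' g g' k k' \<xi> \<eta> \<theta>.
        f \<in> hom1 C z w \<and> f' \<in> hom1 C z w \<and> g \<in> hom1 C y z \<and> g' \<in> hom1 C y z \<and>
        k \<in> hom1 C x y \<and> k' \<in> hom1 C x y \<and>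
        \<xi> \<in> hom2 C f f' \<and> \<eta> \<in> hom2 C g g' \<and> \<theta> \<in> hom2 C k k' \<longrightarrow>
        hcomp C (hcomp C \<xi> \<eta>) \<theta> = hcomp C \<xi> (hcomp C \<eta> \<theta>)) \<and>
     (\<forall>x y f f' \<eta>. f \<in> hom1 C x y \<and> f' \<in> hom1 C x y \<and> \<eta> \<in> hom2 C f f' \<longrightarrow>
        hcomp C (id2 C (id1 C y)) \<eta> = \<eta> \<and> hcomp C \<eta> (id2 C (id1 C x)) = \<eta>)"

text \<open>The canonical functor
  A(P,y) -> (triples) is an isomorphism of categories: bijective on objects and
  bijective on each hom-set.\<close>

definition opcomma ::
  "('o, 'a, 'c) twocat \<Rightarrow> 'o \<Rightarrow> 'o \<Rightarrow> 'o \<Rightarrow> 'a \<Rightarrow> 'a \<Rightarrow> 'o \<Rightarrow> 'a \<Rightarrow> 'a \<Rightarrow> 'c \<Rightarrow> bool" where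
  "opcomma C e b0 b1 p0 p1 P d0 d1 \<alpha> \<longleftrightarrow>
     P \<in> obj C \<and> d0 \<in> hom1 C b1 P \<and> d1 \<in> hom1 C b0 P \<and>
     \<alpha> \<in> hom2 C (comp1 C d1 p0) (comp1 C d0 p1) \<and>
     (\<forall>y \<in> obj C.
        bij_betw (\<lambda>h. (comp1 C h d0, comp1 C h d1, hcomp C (id2 C h) \<alpha>))
          (hom1 C P y)
          {(h0, h1, \<beta>). h0 \<in> hom1 C b1 y \<and> h1 \<in> hom1 C b0 y \<and>
                         \<beta> \<in> hom2 C (comp1 C h1 p0) (comp1 C h0 p1)} \<and>
        (\<forall>h \<in> hom1 C P y. \<forall>h' \<in> hom1 C P y.
           bij_betw (\<lambda>\<xi>. (hcomp C \<xi> (id2 C d0), hcomp C \<xi> (id2 C d1)))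
             (hom2 C h h')
             {(\<xi>0, \<xi>1). \<xi>0 \<in> hom2 C (comp1 C h d0) (comp1 C h' d0) \<and>
                         \<xi>1 \<in> hom2 C (comp1 C h d1) (comp1 C h' d1) \<and>
                         vcomp C (hcomp C \<xi>0 (id2 C p1)) (hcomp C (id2 C h) \<alpha>) =
                         vcomp C (hcomp C (id2 C h') \<alpha>) (hcomp C \<xi>1 (id2 C p0))}))"

definition right_kan ::
  "('o, 'a, 'c) twocat \<Rightarrow> 'o \<Rightarrow> 'o \<Rightarrow> 'o \<Rightarrow> 'a \<Rightarrow> 'a \<Rightarrow> 'a \<Rightarrow> 'c \<Rightarrow> bool" where
  "right_kan C z x y f g r \<gamma> \<longleftrightarrow>
     f \<in> hom1 C z y \<and> g \<in> hom1 C z x \<and> r \<in> hom1 C x y \<and>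
     \<gamma> \<in> hom2 C (comp1 C r g) f \<and>
     (\<forall>k \<in> hom1 C x y.
        bij_betw (\<lambda>\<beta>. vcomp C \<gamma> (hcomp C \<beta> (id2 C g))) (hom2 C k r) (hom2 C (comp1 C k g) f))"

end

theory Submission
  imports Defs
begin

lemma tc_comp1: "two_category C \<Longrightarrow> f \<in> hom1 C y z \<Longrightarrow> g \<in> hom1 C x y \<Longrightarrow> comp1 C f g \<in> hom1 C x z"
  unfolding two_category_def by (elim conjE) meson

lemma tc_assoc: "two_category C \<Longrightarrow> f \<in> hom1 C z w \<Longrightarrow> g \<in> hom1 C y z \<Longrightarrow> k \<in> hom1 C x y \<Longrightarrow>
   comp1 C (comp1 C f g) k = comp1 C f (comp1 C g k)"
  unfolding two_category_def by (elim conjE) meson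

lemma tc_id2: "two_category C \<Longrightarrow> f \<in> hom1 C x y \<Longrightarrow> id2 C f \<in> hom2 C f f"
  unfolding two_category_def by (elim conjE) meson

lemma tc_vcomp: "two_category C \<Longrightarrow> \<theta> \<in> hom2 C g k \<Longrightarrow> \<eta> \<in> hom2 C f g \<Longrightarrow> vcomp C \<theta> \<eta> \<in> hom2 C f k"
  unfolding two_category_def by (elim conjE) meson

lemma tc_vid_l: "two_category C \<Longrightarrow> \<eta> \<in> hom2 C f g \<Longrightarrow> vcomp C (id2 C g) \<eta> = \<eta>"
  unfolding two_category_def by (elim conjE) meson

lemma tc_vid_r: "two_category C \<Longrightarrow> \<eta> \<in> hom2 C f g \<Longrightarrow> vcomp C \<eta> (id2 C f) = \<eta>"
  unfolding two_category_def by (elim conjE) meson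

lemma tc_hcomp: "two_category C \<Longrightarrow> f \<in> hom1 C y z \<Longrightarrow> f' \<in> hom1 C y z \<Longrightarrow> g \<in> hom1 C x y \<Longrightarrow> g' \<in> hom1 C x y
        \<Longrightarrow> \<xi> \<in> hom2 C f f' \<Longrightarrow> \<eta> \<in> hom2 C g g' \<Longrightarrow>
        hcomp C \<xi> \<eta> \<in> hom2 C (comp1 C f g) (comp1 C f' g')"
  unfolding two_category_def by (elim conjE) meson

lemma tc_hid: "two_category C \<Longrightarrow> f \<in> hom1 C y z \<Longrightarrow> g \<in> hom1 C x y \<Longrightarrow>
        hcomp C (id2 C f) (id2 C g) = id2 C (comp1 C f g)"
  unfolding two_category_def by (elim conjE) meson

theorem lemma3p5:
  fixes C :: "('o, 'a, 'c) twocat"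
  assumes "two_category C"
    and "e \<in> obj C" and "b0 \<in> obj C" and "b1 \<in> obj C"
    and "p0 \<in> hom1 C e b0" and "p1 \<in> hom1 C e b1"
    and "opcomma C e b0 b1 p0 p1 P d0 d1 \<alpha>"
    and "y \<in> obj C" and "h \<in> hom1 C P y"
  shows "right_kan C b1 P y (comp1 C h d0) d0 h (id2 C (comp1 C h d0))
     \<longleftrightarrow> right_kan C e b0 y (comp1 C (comp1 C h d0) p1) p0 (comp1 C h d1) (hcomp C (id2 C h) \<alpha>)"
proof -
  note C = assms(1)
  note p0 = assms(5) and p1 = assms(6) and h = assms(9)
  have d0: "d0 \<in> hom1 C b1 P" and d1: "d1 \<in> hom1 C b0 P"
    and \<alpha>: "\<alpha> \<in> hom2 C (comp1 C d1 p0) (comp1 C d0 p1)"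
    using assms(7) unfolding opcomma_def by auto
  have OB: "bij_betw (\<lambda>h. (comp1 C h d0, comp1 C h d1, hcomp C (id2 C h) \<alpha>))
          (hom1 C P y)
          {(h0, h1, \<beta>). h0 \<in> hom1 C b1 y \<and> h1 \<in> hom1 C b0 y \<and>
                         \<beta> \<in> hom2 C (comp1 C h1 p0) (comp1 C h0 p1)}"
    using assms(7,8) unfolding opcomma_def by auto
  have OM: "\<And>k k'. k \<in> hom1 C P y \<Longrightarrow> k' \<in> hom1 C P y \<Longrightarrow>
           bij_betw (\<lambda>\<xi>. (hcomp C \<xi> (id2 C d0), hcomp C \<xi> (id2 C d1)))
             (hom2 C k k')
             {(\<xi>0, \<xi>1). \<xi>0 \<in> hom2 C (comp1 C k d0) (comp1 C k' d0) \<and>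
                         \<xi>1 \<in> hom2 C (comp1 C k d1) (comp1 C k' d1) \<and>
                         vcomp C (hcomp C \<xi>0 (id2 C p1)) (hcomp C (id2 C k) \<alpha>) =
                         vcomp C (hcomp C (id2 C k') \<alpha>) (hcomp C \<xi>1 (id2 C p0))}"
    using assms(7,8) unfolding opcomma_def by auto
  have d1p0: "comp1 C d1 p0 \<in> hom1 C e P" using tc_comp1[OF C d1 p0] .
  have d0p1: "comp1 C d0 p1 \<in> hom1 C e P" using tc_comp1[OF C d0 p1] .
  have hd0: "comp1 C h d0 \<in> hom1 C b1 y" using tc_comp1[OF C h d0] .
  have hd1: "comp1 C h d1 \<in> hom1 C b0 y" using tc_comp1[OF C h d1] .
  have hd0p1: "comp1 C (comp1 C h d0) p1 \<in> hom1 C e y" using tc_comp1[OF C hd0 p1] .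
  have hd1p0: "comp1 C (comp1 C h d1) p0 \<in> hom1 C e y" using tc_comp1[OF C hd1 p0] .
  have kalpha: "\<And>k. k \<in> hom1 C P y \<Longrightarrow> hcomp C (id2 C k) \<alpha> \<in> hom2 C (comp1 C (comp1 C k d1) p0) (comp1 C (comp1 C k d0) p1)"
  proof -
    fix k assume k: "k \<in> hom1 C P y"
    have "hcomp C (id2 C k) \<alpha> \<in> hom2 C (comp1 C k (comp1 C d1 p0)) (comp1 C k (comp1 C d0 p1))"
      by (rule tc_hcomp[OF C k k d1p0 d0p1 tc_id2[OF C k] \<alpha>])
    then show "?thesis k" using tc_assoc[OF C k d1 p0] tc_assoc[OF C k d0 p1] by simp
  qed
  have halpha: "hcomp C (id2 C h) \<alpha> \<in> hom2 C (comp1 C (comp1 C h d1) p0) (comp1 C (comp1 C h d0) p1)"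
    using kalpha[OF h] .
  have RI: "right_kan C b1 P y (comp1 C h d0) d0 h (id2 C (comp1 C h d0)) \<longleftrightarrow>
    (\<forall>k\<in>hom1 C P y. bij_betw (\<lambda>\<beta>. hcomp C \<beta> (id2 C d0)) (hom2 C k h) (hom2 C (comp1 C k d0) (comp1 C h d0)))"
  proof -
    have "\<And>k. k \<in> hom1 C P y \<Longrightarrow> bij_betw (\<lambda>\<beta>. vcomp C (id2 C (comp1 C h d0)) (hcomp C \<beta> (id2 C d0))) (hom2 C k h) (hom2 C (comp1 C k d0) (comp1 C h d0))
       = bij_betw (\<lambda>\<beta>. hcomp C \<beta> (id2 C d0)) (hom2 C k h) (hom2 C (comp1 C k d0) (comp1 C h d0))"
    proof (rule bij_betw_cong)
      fix k \<beta> assume k: "k \<in> hom1 C P y" and b: "\<beta> \<in> hom2 C k h"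
      show "vcomp C (id2 C (comp1 C h d0)) (hcomp C \<beta> (id2 C d0)) = hcomp C \<beta> (id2 C d0)"
        by (rule tc_vid_l[OF C tc_hcomp[OF C k h d0 d0 b tc_id2[OF C d0]]])
    qed
    then show ?thesis unfolding right_kan_def using hd0 d0 h tc_id2[OF C hd0] by auto
  qed
  have RII: "right_kan C e b0 y (comp1 C (comp1 C h d0) p1) p0 (comp1 C h d1) (hcomp C (id2 C h) \<alpha>) \<longleftrightarrow>
    (\<forall>k\<in>hom1 C b0 y. bij_betw (\<lambda>\<beta>. vcomp C (hcomp C (id2 C h) \<alpha>) (hcomp C \<beta> (id2 C p0))) (hom2 C k (comp1 C h d1)) (hom2 C (comp1 C k p0) (comp1 C (comp1 C h d0) p1)))"
    unfolding right_kan_def using hd0p1 p0 hd1 halpha by auto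
  show ?thesis
    unfolding RI RII
  proof
    assume I: "\<forall>k\<in>hom1 C P y. bij_betw (\<lambda>\<beta>. hcomp C \<beta> (id2 C d0)) (hom2 C k h) (hom2 C (comp1 C k d0) (comp1 C h d0))"
    show "\<forall>k\<in>hom1 C b0 y. bij_betw (\<lambda>\<beta>. vcomp C (hcomp C (id2 C h) \<alpha>) (hcomp C \<beta> (id2 C p0))) (hom2 C k (comp1 C h d1)) (hom2 C (comp1 C k p0) (comp1 C (comp1 C h d0) p1))"
    proof
      fix k' assume k': "k' \<in> hom1 C b0 y"
      let ?F = "\<lambda>\<beta>. vcomp C (hcomp C (id2 C h) \<alpha>) (hcomp C \<beta> (id2 C p0))"
      have tyF: "\<And>\<beta>. \<beta> \<in> hom2 C k' (comp1 C h d1) \<Longrightarrow> ?F \<beta> \<in> hom2 C (comp1 C k' p0) (comp1 C (comp1 C h d0) p1)"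
        by (rule tc_vcomp[OF C halpha], rule tc_hcomp[OF C k' hd1 p0 p0 _ tc_id2[OF C p0]])
      \<comment> \<open>key: for each theta, the beta with F beta = theta are exactly the xi * d1 with xi * d0 = id\<close>
      have key: "\<And>\<theta> \<beta>. \<theta> \<in> hom2 C (comp1 C k' p0) (comp1 C (comp1 C h d0) p1) \<Longrightarrow>
         \<exists>k \<in> hom1 C P y. comp1 C k d0 = comp1 C h d0 \<and> comp1 C k d1 = k' \<and> hcomp C (id2 C k) \<alpha> = \<theta>"
      proof -
        fix \<theta> assume th: "\<theta> \<in> hom2 C (comp1 C k' p0) (comp1 C (comp1 C h d0) p1)"
        have "(comp1 C h d0, k', \<theta>) \<in> (\<lambda>h. (comp1 C h d0, comp1 C h d1, hcomp C (id2 C h) \<alpha>)) ` hom1 C P y"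
          using OB th hd0 k' unfolding bij_betw_def by auto
        then show "\<exists>k \<in> hom1 C P y. comp1 C k d0 = comp1 C h d0 \<and> comp1 C k d1 = k' \<and> hcomp C (id2 C k) \<alpha> = \<theta>"
          by auto
      qed
      have eqv: "\<And>\<theta> \<beta> k. \<theta> \<in> hom2 C (comp1 C k' p0) (comp1 C (comp1 C h d0) p1) \<Longrightarrow>
          k \<in> hom1 C P y \<Longrightarrow> comp1 C k d0 = comp1 C h d0 \<Longrightarrow> comp1 C k d1 = k' \<Longrightarrow> hcomp C (id2 C k) \<alpha> = \<theta> \<Longrightarrow>
          \<beta> \<in> hom2 C k' (comp1 C h d1) \<Longrightarrow>
          (?F \<beta> = \<theta>) \<longleftrightarrow> (\<exists>\<xi> \<in> hom2 C k h. hcomp C \<xi> (id2 C d0) = id2 C (comp1 C h d0) \<and> hcomp C \<xi> (id2 C d1) = \<beta>)"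
      proof -
        fix \<theta> \<beta> k
        assume th: "\<theta> \<in> hom2 C (comp1 C k' p0) (comp1 C (comp1 C h d0) p1)" and k: "k \<in> hom1 C P y"
          and e0: "comp1 C k d0 = comp1 C h d0" and e1: "comp1 C k d1 = k'" and ea: "hcomp C (id2 C k) \<alpha> = \<theta>"
          and b: "\<beta> \<in> hom2 C k' (comp1 C h d1)"
        have lhs: "vcomp C (hcomp C (id2 C (comp1 C h d0)) (id2 C p1)) (hcomp C (id2 C k) \<alpha>) = \<theta>"
          using tc_hid[OF C hd0 p1] tc_vid_l[OF C th] ea by simp
        have M: "bij_betw (\<lambda>\<xi>. (hcomp C \<xi> (id2 C d0), hcomp C \<xi> (id2 C d1))) (hom2 C k h)
             {(\<xi>0, \<xi>1). \<xi>0 \<in> hom2 C (comp1 C h d0) (comp1 C h d0) \<and>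
                         \<xi>1 \<in> hom2 C k' (comp1 C h d1) \<and>
                         vcomp C (hcomp C \<xi>0 (id2 C p1)) (hcomp C (id2 C k) \<alpha>) =
                         vcomp C (hcomp C (id2 C h) \<alpha>) (hcomp C \<xi>1 (id2 C p0))}"
          using OM[OF k h] unfolding e0 e1 by assumption
        show "(?F \<beta> = \<theta>) \<longleftrightarrow> (\<exists>\<xi> \<in> hom2 C k h. hcomp C \<xi> (id2 C d0) = id2 C (comp1 C h d0) \<and> hcomp C \<xi> (id2 C d1) = \<beta>)"
        proof
          assume "?F \<beta> = \<theta>"
          then have "(id2 C (comp1 C h d0), \<beta>) \<in> (\<lambda>\<xi>. (hcomp C \<xi> (id2 C d0), hcomp C \<xi> (id2 C d1))) ` hom2 C k h"
            using M b tc_id2[OF C hd0] lhs unfolding bij_betw_def by auto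
          then show "\<exists>\<xi> \<in> hom2 C k h. hcomp C \<xi> (id2 C d0) = id2 C (comp1 C h d0) \<and> hcomp C \<xi> (id2 C d1) = \<beta>"
            by auto
        next
          assume "\<exists>\<xi> \<in> hom2 C k h. hcomp C \<xi> (id2 C d0) = id2 C (comp1 C h d0) \<and> hcomp C \<xi> (id2 C d1) = \<beta>"
          then obtain \<xi> where x: "\<xi> \<in> hom2 C k h" "hcomp C \<xi> (id2 C d0) = id2 C (comp1 C h d0)" "hcomp C \<xi> (id2 C d1) = \<beta>"
            by blast
          have "(hcomp C \<xi> (id2 C d0), hcomp C \<xi> (id2 C d1)) \<in> {(\<xi>0, \<xi>1). \<xi>0 \<in> hom2 C (comp1 C h d0) (comp1 C h d0) \<and>
                         \<xi>1 \<in> hom2 C k' (comp1 C h d1) \<and>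
                         vcomp C (hcomp C \<xi>0 (id2 C p1)) (hcomp C (id2 C k) \<alpha>) =
                         vcomp C (hcomp C (id2 C h) \<alpha>) (hcomp C \<xi>1 (id2 C p0))}"
            using M x(1) unfolding bij_betw_def by blast
          then show "?F \<beta> = \<theta>" using x lhs by simp
        qed
      qed
      show "bij_betw ?F (hom2 C k' (comp1 C h d1)) (hom2 C (comp1 C k' p0) (comp1 C (comp1 C h d0) p1))"
        unfolding bij_betw_def
      proof (intro conjI)
        show "inj_on ?F (hom2 C k' (comp1 C h d1))"
        proof (rule inj_onI)
          fix b1' b2 assume b1': "b1' \<in> hom2 C k' (comp1 C h d1)" and b2: "b2 \<in> hom2 C k' (comp1 C h d1)"
            and eq: "?F b1' = ?F b2"
          define \<theta> where "\<theta> = ?F b1'"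
          have th: "\<theta> \<in> hom2 C (comp1 C k' p0) (comp1 C (comp1 C h d0) p1)" using tyF[OF b1'] \<theta>_def by simp
          obtain k where k: "k \<in> hom1 C P y" "comp1 C k d0 = comp1 C h d0" "comp1 C k d1 = k'" "hcomp C (id2 C k) \<alpha> = \<theta>"
            using key[OF th] by blast
          obtain \<xi>1 where x1: "\<xi>1 \<in> hom2 C k h" "hcomp C \<xi>1 (id2 C d0) = id2 C (comp1 C h d0)" "hcomp C \<xi>1 (id2 C d1) = b1'"
            using eqv[OF th k b1'] \<theta>_def by blast
          obtain \<xi>2 where x2: "\<xi>2 \<in> hom2 C k h" "hcomp C \<xi>2 (id2 C d0) = id2 C (comp1 C h d0)" "hcomp C \<xi>2 (id2 C d1) = b2"
            using eqv[OF th k b2] \<theta>_def eq by metis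
          have "inj_on (\<lambda>\<beta>. hcomp C \<beta> (id2 C d0)) (hom2 C k h)" using I k(1) unfolding bij_betw_def by blast
          then have "\<xi>1 = \<xi>2" using x1(1,2) x2(1,2) by (metis inj_onD)
          then show "b1' = b2" using x1 x2 by simp
        qed
      next
        show "?F ` hom2 C k' (comp1 C h d1) = hom2 C (comp1 C k' p0) (comp1 C (comp1 C h d0) p1)"
        proof
          show "?F ` hom2 C k' (comp1 C h d1) \<subseteq> hom2 C (comp1 C k' p0) (comp1 C (comp1 C h d0) p1)"
            using tyF by blast
        next
          show "hom2 C (comp1 C k' p0) (comp1 C (comp1 C h d0) p1) \<subseteq> ?F ` hom2 C k' (comp1 C h d1)"
          proof
            fix \<theta> assume th: "\<theta> \<in> hom2 C (comp1 C k' p0) (comp1 C (comp1 C h d0) p1)"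
            obtain k where k: "k \<in> hom1 C P y" "comp1 C k d0 = comp1 C h d0" "comp1 C k d1 = k'" "hcomp C (id2 C k) \<alpha> = \<theta>"
              using key[OF th] by blast
            have "id2 C (comp1 C h d0) \<in> hom2 C (comp1 C k d0) (comp1 C h d0)" using tc_id2[OF C hd0] k(2) by simp
            then obtain \<xi> where x: "\<xi> \<in> hom2 C k h" "hcomp C \<xi> (id2 C d0) = id2 C (comp1 C h d0)"
              using I k(1) unfolding bij_betw_def by (metis (no_types, lifting) imageE)
            have xb: "hcomp C \<xi> (id2 C d1) \<in> hom2 C k' (comp1 C h d1)"
              using tc_hcomp[OF C k(1) h d1 d1 x(1) tc_id2[OF C d1]] k(3) by simp
            have "?F (hcomp C \<xi> (id2 C d1)) = \<theta>"
              using eqv[OF th k xb] x by blast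
            then show "\<theta> \<in> ?F ` hom2 C k' (comp1 C h d1)" using xb by (metis image_eqI)
          qed
        qed
      qed
    qed
  next
    assume II: "\<forall>k\<in>hom1 C b0 y. bij_betw (\<lambda>\<beta>. vcomp C (hcomp C (id2 C h) \<alpha>) (hcomp C \<beta> (id2 C p0))) (hom2 C k (comp1 C h d1)) (hom2 C (comp1 C k p0) (comp1 C (comp1 C h d0) p1))"
    let ?F = "\<lambda>\<beta>. vcomp C (hcomp C (id2 C h) \<alpha>) (hcomp C \<beta> (id2 C p0))"
    show "\<forall>k\<in>hom1 C P y. bij_betw (\<lambda>\<beta>. hcomp C \<beta> (id2 C d0)) (hom2 C k h) (hom2 C (comp1 C k d0) (comp1 C h d0))"
    proof
      fix k assume k: "k \<in> hom1 C P y"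
      have kd1: "comp1 C k d1 \<in> hom1 C b0 y" using tc_comp1[OF C k d1] .
      have kd0: "comp1 C k d0 \<in> hom1 C b1 y" using tc_comp1[OF C k d0] .
      note M = OM[OF k h]
      note B = II[rule_format, OF kd1]
      show "bij_betw (\<lambda>\<beta>. hcomp C \<beta> (id2 C d0)) (hom2 C k h) (hom2 C (comp1 C k d0) (comp1 C h d0))"
        unfolding bij_betw_def
      proof (intro conjI)
        show "inj_on (\<lambda>\<beta>. hcomp C \<beta> (id2 C d0)) (hom2 C k h)"
        proof (rule inj_onI)
          fix x1 x2 assume x1: "x1 \<in> hom2 C k h" and x2: "x2 \<in> hom2 C k h"
            and eq: "hcomp C x1 (id2 C d0) = hcomp C x2 (id2 C d0)"
          have m1: "(hcomp C x1 (id2 C d0), hcomp C x1 (id2 C d1)) \<in> {(\<xi>0, \<xi>1). \<xi>0 \<in> hom2 C (comp1 C k d0) (comp1 C h d0) \<and>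
                         \<xi>1 \<in> hom2 C (comp1 C k d1) (comp1 C h d1) \<and>
                         vcomp C (hcomp C \<xi>0 (id2 C p1)) (hcomp C (id2 C k) \<alpha>) =
                         vcomp C (hcomp C (id2 C h) \<alpha>) (hcomp C \<xi>1 (id2 C p0))}"
            using M x1 unfolding bij_betw_def by blast
          have m2: "(hcomp C x2 (id2 C d0), hcomp C x2 (id2 C d1)) \<in> {(\<xi>0, \<xi>1). \<xi>0 \<in> hom2 C (comp1 C k d0) (comp1 C h d0) \<and>
                         \<xi>1 \<in> hom2 C (comp1 C k d1) (comp1 C h d1) \<and>
                         vcomp C (hcomp C \<xi>0 (id2 C p1)) (hcomp C (id2 C k) \<alpha>) =
                         vcomp C (hcomp C (id2 C h) \<alpha>) (hcomp C \<xi>1 (id2 C p0))}"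
            using M x2 unfolding bij_betw_def by blast
          have "?F (hcomp C x1 (id2 C d1)) = ?F (hcomp C x2 (id2 C d1))"
            using m1 m2 eq by simp
          then have "hcomp C x1 (id2 C d1) = hcomp C x2 (id2 C d1)"
            using B m1 m2 unfolding bij_betw_def by (auto dest: inj_onD)
          then have "(\<lambda>\<xi>. (hcomp C \<xi> (id2 C d0), hcomp C \<xi> (id2 C d1))) x1 = (\<lambda>\<xi>. (hcomp C \<xi> (id2 C d0), hcomp C \<xi> (id2 C d1))) x2"
            using eq by simp
          then show "x1 = x2" using M x1 x2 unfolding bij_betw_def by (auto dest: inj_onD)
        qed
      next
        show "(\<lambda>\<beta>. hcomp C \<beta> (id2 C d0)) ` hom2 C k h = hom2 C (comp1 C k d0) (comp1 C h d0)"
        proof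
          show "(\<lambda>\<beta>. hcomp C \<beta> (id2 C d0)) ` hom2 C k h \<subseteq> hom2 C (comp1 C k d0) (comp1 C h d0)"
            using tc_hcomp[OF C k h d0 d0 _ tc_id2[OF C d0]] by blast
        next
          show "hom2 C (comp1 C k d0) (comp1 C h d0) \<subseteq> (\<lambda>\<beta>. hcomp C \<beta> (id2 C d0)) ` hom2 C k h"
          proof
            fix \<xi>0 assume x0: "\<xi>0 \<in> hom2 C (comp1 C k d0) (comp1 C h d0)"
            define \<theta> where "\<theta> = vcomp C (hcomp C \<xi>0 (id2 C p1)) (hcomp C (id2 C k) \<alpha>)"
            have th: "\<theta> \<in> hom2 C (comp1 C (comp1 C k d1) p0) (comp1 C (comp1 C h d0) p1)"
              unfolding \<theta>_def
              by (rule tc_vcomp[OF C tc_hcomp[OF C kd0 hd0 p1 p1 x0 tc_id2[OF C p1]] kalpha[OF k]])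
            then obtain \<xi>1 where x1: "\<xi>1 \<in> hom2 C (comp1 C k d1) (comp1 C h d1)" "?F \<xi>1 = \<theta>"
              using B unfolding bij_betw_def by (metis (no_types, lifting) imageE)
            have "(\<xi>0, \<xi>1) \<in> (\<lambda>\<xi>. (hcomp C \<xi> (id2 C d0), hcomp C \<xi> (id2 C d1))) ` hom2 C k h"
              using M x0 x1 \<theta>_def unfolding bij_betw_def by auto
            then show "\<xi>0 \<in> (\<lambda>\<beta>. hcomp C \<beta> (id2 C d0)) ` hom2 C k h" by force
          qed
        qed
      qed
    qed
  qed
qed

end
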